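(* Let $\alpha>0$ and suppose $H$ satisfies (B1) and (B2). Let $u\in\mathcal{U}^+(\mathbb{T}^d\times I)$ be a viscosity subsolution and $v\in\mathcal{U}^-(\mathbb{T}^d\times I)$ a viscosity supersolution of $$\alpha w(x,\xi)+H(x,Dw(x,\xi),\xi)+\int_I k(\xi,\eta)\big(w(x,\xi)-w(x,\eta)\big)\,d\eta=0\quad\text{in }\mathbb{T}^d\times I,\qquad(\mathrm{DP})$$ and assume $u$ and $-v$ are bounded above on $\mathbb{T}^d\times I$. Then $u\le v$ on $\mathbb{T}^d\times I$.
   Context: $I\subset\mathbb{R}$ is a finite interval with $|I|=1$; $\mathbb{T}^d$ is the flat torus; $k:I\times I\to\mathbb{R}$ is Borel measurable with $0<k_0\le k\le k_1$. $H\in C(\mathbb{T}^d\times\mathbb{R}^d)\otimes\mathcal{B}(I)$ (continuous in $(x,p)$ for each $\xi$, Borel in $\xi$), with $H(\cdot,p,\cdot)$ bounded for each $p$. (B1): there are constants $C_1,C_2>0$, $m>1$ with $C_1|p|^m-C_2\le H(x,p,\xi)$ for all $(x,p,\xi)$. (B2): for each $R>0$ there is a modulus of continuity $\omega_R$ with $|H(x,p,\xi)-H(y,p,\xi)|\le\omega_R(|x-y|)$ for all $x,y\in\mathbb{T}^d$, $|p|\le R$, $\xi\in I$. $\mathcal{U}^+(\mathbb{T}^d\times I)$: functions $u$ with $u(x,\cdot)$ Borel measurable and integrable on $I$ for each $x$ and $u(\cdot,\xi)$ upper semicontinuous for each $\xi$; $\mathcal{U}^-:=-\mathcal{U}^+$.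 $u\in\mathcal{U}^+$ is a viscosity subsolution of (DP) if whenever $\phi\in C^1(\mathbb{T}^d)$, $\xi\in I$, and $u(\cdot,\xi)-\phi$ has a local maximum at $\hat x$, then $\alpha u(\hat x,\xi)+H(\hat x,D\phi(\hat x),\xi)+\int_I k(\xi,\eta)(u(\hat x,\xi)-u(\hat x,\eta))d\eta\le0$; a supersolution $v\in\mathcal{U}^-$ satisfies the reverse inequality at local minima of $v(\cdot,\xi)-\phi$. *)

theory Defs
  imports "HOL-Analysis.Analysis"
begin

text \<open>Points of the flat torus are represented by their Z^d-periodic lifts to R^d.\<close>

definition int_lattice :: "(real ^ 'd) set" where
  "int_lattice = {z. \<forall>i. z $ i \<in> \<int>}"

definition periodic_fn :: "(real ^ 'd \<Rightarrow> 'b) \<Rightarrow> bool" where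
  "periodic_fn f \<longleftrightarrow> (\<forall>x. \<forall>z \<in> int_lattice. f (x + z) = f x)"

definition usc :: "('a::topological_space \<Rightarrow> real) \<Rightarrow> bool" where
  "usc f \<longleftrightarrow> (\<forall>x t. f x < t \<longrightarrow> (\<forall>\<^sub>F y in at x. f y < t))"

definition modulus :: "(real \<Rightarrow> real) \<Rightarrow> bool" where
  "modulus \<omega> \<longleftrightarrow> \<omega> 0 = 0 \<and> (\<forall>r\<ge>0. \<omega> r \<ge> 0) \<and> mono_on {0..} \<omega>
     \<and> (\<omega> \<longlongrightarrow> 0) (at_right 0)"

definition Uplus :: "real set \<Rightarrow> (real ^ 'd \<Rightarrow> real \<Rightarrow> real) \<Rightarrow> bool" where
  "Uplus I u \<longleftrightarrow> (\<forall>\<xi>\<in>I. periodic_fn (\<lambda>x. u x \<xi>))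
     \<and> (\<forall>x. set_borel_measurable lborel I (u x) \<and> set_integrable lborel I (u x))
     \<and> (\<forall>\<xi>\<in>I. usc (\<lambda>x. u x \<xi>))"

definition Uminus :: "real set \<Rightarrow> (real ^ 'd \<Rightarrow> real \<Rightarrow> real) \<Rightarrow> bool" where
  "Uminus I v \<longleftrightarrow> Uplus I (\<lambda>x \<xi>. - v x \<xi>)"

definition C1_torus :: "(real ^ 'd \<Rightarrow> real) \<Rightarrow> (real ^ 'd \<Rightarrow> real ^ 'd) \<Rightarrow> bool" where
  "C1_torus \<phi> D\<phi> \<longleftrightarrow> periodic_fn \<phi> \<and> continuous_on UNIV D\<phi>
     \<and> (\<forall>x. (\<phi> has_derivative (\<lambda>h. D\<phi> x \<bullet> h)) (at x))"

definition loc_max :: "(real ^ 'd \<Rightarrow> real) \<Rightarrow> real ^ 'd \<Rightarrow> bool" where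
  "loc_max f x \<longleftrightarrow> (\<exists>e>0. \<forall>y. dist y x < e \<longrightarrow> f y \<le> f x)"

definition loc_min :: "(real ^ 'd \<Rightarrow> real) \<Rightarrow> real ^ 'd \<Rightarrow> bool" where
  "loc_min f x \<longleftrightarrow> (\<exists>e>0. \<forall>y. dist y x < e \<longrightarrow> f x \<le> f y)"

definition visc_sub ::
  "real set \<Rightarrow> real \<Rightarrow> (real ^ 'd \<Rightarrow> real ^ 'd \<Rightarrow> real \<Rightarrow> real) \<Rightarrow> (real \<Rightarrow> real \<Rightarrow> real)
     \<Rightarrow> (real ^ 'd \<Rightarrow> real \<Rightarrow> real) \<Rightarrow> bool" where
  "visc_sub I \<alpha> H k u \<longleftrightarrow> Uplus I u \<and>
     (\<forall>\<phi> D\<phi> \<xi> xh. C1_torus \<phi> D\<phi> \<and> \<xi> \<in> I \<and> loc_max (\<lambda>x. u x \<xi> - \<phi> x) xh \<longrightarrow>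
        \<alpha> * u xh \<xi> + H xh (D\<phi> xh) \<xi> + (LINT \<eta>:I|lborel. k \<xi> \<eta> * (u xh \<xi> - u xh \<eta>)) \<le> 0)"

definition visc_super ::
  "real set \<Rightarrow> real \<Rightarrow> (real ^ 'd \<Rightarrow> real ^ 'd \<Rightarrow> real \<Rightarrow> real) \<Rightarrow> (real \<Rightarrow> real \<Rightarrow> real)
     \<Rightarrow> (real ^ 'd \<Rightarrow> real \<Rightarrow> real) \<Rightarrow> bool" where
  "visc_super I \<alpha> H k v \<longleftrightarrow> Uminus I v \<and>
     (\<forall>\<phi> D\<phi> \<xi> xh. C1_torus \<phi> D\<phi> \<and> \<xi> \<in> I \<and> loc_min (\<lambda>x. v x \<xi> - \<phi> x) xh \<longrightarrow>
        \<alpha> * v xh \<xi> + H xh (D\<phi> xh) \<xi> + (LINT \<eta>:I|lborel. k \<xi> \<eta> * (v xh \<xi> - v xh \<eta>)) \<ge> 0)"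

end

theory Submission
  imports Defs
begin


lemma rev_fatou:
  fixes f :: "nat \<Rightarrow> real \<Rightarrow> real" and c :: "real \<Rightarrow> real"
  assumes Is: "I \<in> sets lborel" and Ifin: "emeasure lborel I < \<infinity>"
    and fm: "\<And>n. f n \<in> borel_measurable lborel" and cm: "c \<in> borel_measurable lborel"
    and fi: "\<And>n. set_integrable lborel I (f n)"
    and fB: "\<And>n x. f n x \<le> B" and cB: "\<And>x. \<bar>c x\<bar> \<le> B"
    and lim: "\<And>x \<delta>. \<delta> > 0 \<Longrightarrow> eventually (\<lambda>n. f n x \<le> c x + \<delta>) sequentially"
    and dpos: "\<delta> > 0"
  shows "eventually (\<lambda>n. (LINT x:I|lborel. f n x) \<le> (LINT x:I|lborel. c x) + \<delta>) sequentially"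
proof -
  define G where "G n x = (SUP m\<in>{n..}. max (c x) (f m x))" for n x
  have bdd: "bdd_above ((\<lambda>m. max (c x) (f m x)) ` {n..})" for n x
    using fB cB by (intro bdd_aboveI[where M=B]) (auto simp: abs_le_iff)
  have Gm: "G n \<in> borel_measurable lborel" for n
    unfolding G_def using bdd fm cm by (intro borel_measurable_cSUP) auto
  have Gge: "max (c x) (f m x) \<le> G n x" if "n \<le> m" for n m x
    unfolding G_def using bdd that by (intro cSUP_upper) auto
  have Gle: "G n x \<le> B" for n x
    unfolding G_def using fB cB by (intro cSUP_least) (auto simp: abs_le_iff)
  have Glim: "(\<lambda>n. G n x) \<longlonglongrightarrow> c x" for x
    unfolding lim_sequentially
  proof (intro allI impI)
    fix r :: real assume r: "r > 0"
    from lim[of "r/2" x] r obtain N where N: "\<And>m. m \<ge> N \<Longrightarrow> f m x \<le> c x + r/2"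
      by (auto simp: eventually_sequentially)
    show "\<exists>no. \<forall>n\<ge>no. dist (G n x) (c x) < r"
    proof (intro exI allI impI)
      fix n assume n: "n \<ge> N"
      have "G n x \<le> c x + r/2"
        unfolding G_def using N n r by (intro cSUP_least) auto
      moreover have "c x \<le> G n x" using Gge[of n n x] by simp
      ultimately show "dist (G n x) (c x) < r" using r by (simp add: dist_real_def)
    qed
  qed
  have wint: "integrable lborel (\<lambda>x. indicator I x * B)"
    using Is Ifin by (intro integrable_mult_left integrable_real_indicator) auto
  have bound: "norm (indicator I x * G n x) \<le> indicator I x * B" for n x
  proof -
    have "-B \<le> G n x" using Gge[of n n x] cB[of x] by (simp add: abs_le_iff)
    then show ?thesis using Gle[of n x] by (auto simp: indicator_def)
  qed
  have sm: "(\<lambda>x. indicator I x * G n x) \<in> borel_measurable lborel" for n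
    using Is Gm by measurable
  have cm2: "(\<lambda>x. indicator I x * c x) \<in> borel_measurable lborel"
    using Is cm by measurable
  have lim2: "AE x in lborel. (\<lambda>n. indicator I x * G n x) \<longlonglongrightarrow> indicator I x * c x"
    by (intro AE_I2 tendsto_mult tendsto_const Glim)
  have bd2: "AE x in lborel. norm (indicator I x * G n x) \<le> indicator I x * B" for n
    by (intro AE_I2 bound)
  note DC = integrable_dominated_convergence2[OF cm2 sm wint lim2 bd2]
    integral_dominated_convergence[OF cm2 sm wint lim2 bd2]
  have conv: "(\<lambda>n. integral\<^sup>L lborel (\<lambda>x. indicator I x * G n x)) \<longlonglongrightarrow> integral\<^sup>L lborel (\<lambda>x. indicator I x * c x)"
    and Gint: "\<And>n. integrable lborel (\<lambda>x. indicator I x * G n x)"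
    using DC by auto
  have "eventually (\<lambda>n. integral\<^sup>L lborel (\<lambda>x. indicator I x * G n x) < integral\<^sup>L lborel (\<lambda>x. indicator I x * c x) + \<delta>) sequentially"
    using conv dpos by (intro order_tendstoD) auto
  then show ?thesis
  proof (rule eventually_mono)
    fix n assume *: "integral\<^sup>L lborel (\<lambda>x. indicator I x * G n x) < integral\<^sup>L lborel (\<lambda>x. indicator I x * c x) + \<delta>"
    have "(LINT x:I|lborel. f n x) \<le> (LINT x:I|lborel. G n x)"
      using fi Gint Gge[of n n] by (intro set_integral_mono) (auto simp: set_integrable_def)
    then show "(LINT x:I|lborel. f n x) \<le> (LINT x:I|lborel. c x) + \<delta>"
      using * by (simp add: set_lebesgue_integral_def)
  qed
qed



definition psi :: "real ^ 'd \<Rightarrow> real" where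
  "psi z = (\<Sum>i\<in>UNIV. (sin (pi * z $ i))^2)"
definition Dpsi :: "real ^ 'd \<Rightarrow> real ^ 'd" where
  "Dpsi z = (\<chi> i. 2 * pi * (sin (pi * z $ i) * cos (pi * z $ i)))"

lemma psi_nonneg: "psi z \<ge> 0" unfolding psi_def by (intro sum_nonneg) auto
lemma psi_0: "psi 0 = 0" unfolding psi_def by simp

lemma sin_sq_shift: assumes "l \<in> \<int>" shows "(sin (pi * (t + l)))^2 = (sin (pi * t))^2"
proof -
  from assms obtain n where l: "l = of_int n" by (auto elim: Ints_cases)
  have "sin (pi * (t + l)) = sin (pi*t) * cos (pi * of_int n)"
    by (simp add: l distrib_left sin_add)
  moreover have "(cos (pi * of_int n))^2 = 1" by simp
  ultimately show ?thesis by (simp add: power_mult_distrib)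
qed

lemma psi_periodic: "l \<in> int_lattice \<Longrightarrow> psi (z + l) = psi z"
  unfolding psi_def int_lattice_def by (auto intro!: sum.cong sin_sq_shift)

lemma Dpsi_cont: "continuous_on UNIV Dpsi"
  unfolding Dpsi_def
  by (intro continuous_on_vec_lambda continuous_intros)

lemma sinsq_deriv: "((\<lambda>t::real. (sin (pi * t))^2) has_real_derivative 2 * pi * (sin (pi * t) * cos (pi * t))) (at t)"
  by (auto intro!: derivative_eq_intros simp: algebra_simps)

lemma psi_deriv: "((\<lambda>x. psi (x - y)) has_derivative (\<lambda>h. Dpsi (x - y) \<bullet> h)) (at x)"
proof -
  have c: "((\<lambda>x. (sin (pi * (x - y) $ i))^2) has_derivative (\<lambda>h. (2 * pi * (sin (pi * (x-y) $ i) * cos (pi * (x-y) $ i))) * h $ i)) (at x)" for i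
  proof -
    have l: "((\<lambda>x. (x - y) $ i) has_derivative (\<lambda>h. h $ i)) (at x)"
      by (auto intro!: derivative_eq_intros bounded_linear_imp_has_derivative)
    have "((\<lambda>t::real. (sin (pi * t))^2) has_derivative (\<lambda>h. (2 * pi * (sin (pi * (x-y) $ i) * cos (pi * (x-y) $ i))) * h)) (at ((x - y) $ i))"
      using sinsq_deriv[of "(x-y)$i"] by (simp add: has_field_derivative_def)
    from has_derivative_compose[OF l this] show ?thesis by simp
  qed
  have "((\<lambda>x. \<Sum>i\<in>UNIV. (sin (pi * (x - y) $ i))^2) has_derivative (\<lambda>h. \<Sum>i\<in>UNIV. (2 * pi * (sin (pi * (x-y) $ i) * cos (pi * (x-y) $ i))) * h $ i)) (at x)"
    by (intro has_derivative_sum c)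
  then show ?thesis unfolding psi_def Dpsi_def inner_vec_def by simp
qed

lemma psi_deriv2: "((\<lambda>y. psi (x - y)) has_derivative (\<lambda>h. (- Dpsi (x - y)) \<bullet> h)) (at y)"
proof -
  have e: "(\<lambda>y. psi (x - y)) = (\<lambda>y. psi (y - x))" 
  proof
    fix y
    have "sin (pi * (x - y) $ i) ^ 2 = sin (pi * (y - x) $ i) ^ 2" for i
    proof -
      have "pi * (x - y) $ i = - (pi * (y - x) $ i)" by (simp add: algebra_simps)
      then have "sin (pi * (x - y) $ i) = - sin (pi * (y - x) $ i)" by (simp only: sin_minus)
      then show ?thesis by simp
    qed
    then show "psi (x - y) = psi (y - x)" unfolding psi_def by simp
  qed
  have "Dpsi (y - x) = - Dpsi (x - y)"
  proof -
    have "pi * (y - x) $ i = - (pi * (x - y) $ i)" for i by (simp add: algebra_simps)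
    then show ?thesis unfolding Dpsi_def by (simp add: vec_eq_iff del: vector_minus_component)
  qed
  then show ?thesis using psi_deriv[of x y] unfolding e by (metis psi_deriv)
qed



lemma sin_lower: fixes x :: real assumes "0 \<le> x" "x \<le> 2" shows "x - x^3/6 \<le> sin x"
proof -
  have "\<bar>sin x - (\<Sum>m<3. sin_coeff m * x ^ m)\<bar> \<le> inverse (fact 3) * \<bar>x\<bar> ^ 3"
    by (rule Maclaurin_sin_bound)
  moreover have "(\<Sum>m<3. sin_coeff m * x ^ m) = x"
    by (simp add: numeral_3_eq_3 sin_coeff_def)
  ultimately have "\<bar>sin x - x\<bar> \<le> x^3/6" using assms by (simp add: fact_numeral)
  then have "x - sin x \<le> x^3/6" by linarith
  then show ?thesis by linarith
qed

lemma sin_pi_lower: assumes "\<bar>t\<bar> \<le> 1/2" shows "t^2 \<le> (sin (pi * t))^2"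
proof -
  have key: "s \<le> sin (pi * s)" if "0 \<le> s" "s \<le> 1/2" for s
  proof -
    let ?x = "pi * s"
    have p: "pi \<le> 4" "3 \<le> pi" using pi_less_4 pi_gt3 by linarith+
    have x0: "0 \<le> ?x" using that by simp
    have "pi * s \<le> 4 * (1/2)" by (rule mult_mono) (use that p in auto)
    then have x2: "?x \<le> 2" by simp
    have "?x^3/6 \<le> ?x * (4/6)"
    proof -
      have "?x^2 \<le> 2^2" using x0 x2 by (intro power_mono) auto
      then have "?x * ?x^2 \<le> ?x * 4" using x0 by (intro mult_left_mono) auto
      then have "?x^3 \<le> ?x * 4" by (simp add: power3_eq_cube power2_eq_square mult.assoc)
      then show ?thesis by simp
    qed
    then have "?x / 3 \<le> sin ?x" using sin_lower[OF x0 x2] by linarith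
    moreover have "3 * s \<le> pi * s" using that p by (intro mult_right_mono) auto
    then have "s \<le> ?x / 3" by simp
    ultimately show ?thesis by linarith
  qed
  show ?thesis
  proof (cases "t \<ge> 0")
    case True
    then have "t \<le> sin (pi * t)" using key assms by auto
    then show ?thesis using True by (intro power_mono) auto
  next
    case False
    then have "-t \<le> sin (pi * (-t))" using key[of "-t"] assms by auto
    then have "(-t)^2 \<le> (sin (pi * (-t)))^2" using False by (intro power_mono) auto
    then show ?thesis by simp
  qed
qed



lemma usc_seq:
  assumes "usc f" "X \<longlonglongrightarrow> x" "f x < t"
  shows "eventually (\<lambda>n. f (X n) < t) sequentially"
proof -
  from assms(1,3) have "eventually (\<lambda>y. f y < t) (at x)" unfolding usc_def by blast
  then obtain S where S: "open S" "x \<in> S" "\<And>y. y \<in> S \<Longrightarrow> y \<noteq> x \<Longrightarrow> f y < t"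
    unfolding eventually_at_topological by blast
  have "eventually (\<lambda>n. X n \<in> S) sequentially"
    using assms(2) S(1,2) by (rule topological_tendstoD)
  then show ?thesis
    by (rule eventually_mono) (use S assms(3) in fastforce)
qed

lemma lattice_diff: "a \<in> int_lattice \<Longrightarrow> b \<in> int_lattice \<Longrightarrow> a - b \<in> int_lattice"
  unfolding int_lattice_def by auto

lemma lattice_zero: "0 \<in> int_lattice"
  unfolding int_lattice_def by auto

lemma red_box: "\<exists>l\<in>int_lattice. x + l \<in> cbox 0 1"
proof (intro bexI)
  let ?l = "(\<chi> i. - of_int \<lfloor>x $ i\<rfloor>) :: real ^ 'a"
  show "?l \<in> int_lattice" unfolding int_lattice_def by auto
  show "x + ?l \<in> cbox 0 1"
    unfolding mem_box_cart
  proof (intro allI conjI)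
    fix i
    show "0 $ i \<le> (x + ?l) $ i" by simp
    have "x $ i < of_int \<lfloor>x $ i\<rfloor> + 1" by (rule real_of_int_floor_add_one_gt)
    moreover have "(x + ?l) $ i = x $ i - of_int \<lfloor>x $ i\<rfloor>" by simp
    moreover have "(1 :: real ^ 'a) $ i = 1" by simp
    ultimately show "(x + ?l) $ i \<le> 1 $ i" by linarith
  qed
qed

lemma red_half: "\<exists>l\<in>int_lattice. \<forall>i. \<bar>(x - (y + l)) $ i\<bar> \<le> 1/2"
proof (intro bexI allI)
  let ?l = "(\<chi> i. of_int (round ((x - y) $ i))) :: real ^ 'a"
  show "?l \<in> int_lattice" unfolding int_lattice_def by auto
  fix i
  have "\<bar>of_int (round ((x - y) $ i)) - (x-y) $ i\<bar> \<le> 1/2" by (rule of_int_round_abs_le)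
  moreover have "(x - (y + ?l)) $ i = - (of_int (round ((x - y) $ i)) - (x-y) $ i)" by simp
  ultimately show "\<bar>(x - (y + ?l)) $ i\<bar> \<le> 1/2" by (simp only: abs_minus_cancel)
qed

lemma psi_cont: "continuous_on UNIV psi"
  unfolding psi_def by (intro continuous_intros)

lemma exists_max:
  fixes U V :: "real ^ 'd \<Rightarrow> real"
  assumes Uu: "usc U" and Vu: "usc (\<lambda>y. - V y)"
    and Up: "periodic_fn U" and Vp: "periodic_fn V"
    and Ub: "\<And>x. U x \<le> Cu" and Vb: "\<And>y. - V y \<le> Cv" and c: "c > 0"
  shows "\<exists>a b. a \<in> cbox 0 1 \<and> (\<forall>i. \<bar>(a - b) $ i\<bar> \<le> 1/2) \<and>
     (\<forall>x y. U x - V y - c * psi (x - y) \<le> U a - V b - c * psi (a - b))"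
proof -
  define \<Phi> where "\<Phi> x y = U x - V y - c * psi (x - y)" for x y
  have per: "\<Phi> (x + l1) (y + l2) = \<Phi> x y" if "l1 \<in> int_lattice" "l2 \<in> int_lattice" for x y l1 l2
  proof -
    have "psi (x + l1 - (y + l2)) = psi ((x - y) + (l1 - l2))"
      by (rule arg_cong[where f=psi]) (simp add: algebra_simps)
    also have "\<dots> = psi (x - y)" by (rule psi_periodic[OF lattice_diff[OF that]])
    finally have "psi (x + l1 - (y + l2)) = psi (x - y)" .
    then show ?thesis unfolding \<Phi>_def using Up Vp that unfolding periodic_fn_def by simp
  qed
  have \<Phi>b: "\<Phi> x y \<le> Cu + Cv" for x y
    using Ub[of x] Vb[of y] psi_nonneg[of "x - y"] c unfolding \<Phi>_def
    by (smt (verit) mult_nonneg_nonneg)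
  define S :: "((real ^ 'd) \<times> (real ^ 'd)) set" where "S = cbox 0 1 \<times> cbox 0 1"
  have "(0::real^'d) \<in> cbox 0 1" by (simp add: mem_box_cart)
  then have Sne: "S \<noteq> {}" unfolding S_def by blast
  define M where "M = (SUP p\<in>S. \<Phi> (fst p) (snd p))"
  have bdd: "bdd_above ((\<lambda>p. \<Phi> (fst p) (snd p)) ` S)"
    using \<Phi>b by (intro bdd_aboveI[where M="Cu+Cv"]) auto
  have "\<exists>p\<in>S. M - 1 / (real n + 1) < \<Phi> (fst p) (snd p)" for n
  proof -
    have "M - 1 / (real n + 1) < M" by simp
    then show ?thesis unfolding M_def using less_cSUP_iff[OF Sne bdd] by blast
  qed
  then obtain P where P: "\<And>n. P n \<in> S" "\<And>n. M - 1 / (real n + 1) < \<Phi> (fst (P n)) (snd (P n))"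
    by metis
  have "compact S" unfolding S_def by (intro compact_Times compact_cbox)
  then have "seq_compact S" by (rule compact_imp_seq_compact)
  then obtain q r where q: "q \<in> S" and r: "strict_mono (r :: nat \<Rightarrow> nat)" and lim: "(P \<circ> r) \<longlonglongrightarrow> q"
    using P(1) by (metis seq_compactE)
  obtain a0 b0 where q0: "q = (a0, b0)" by fastforce
  have la: "(\<lambda>n. fst (P (r n))) \<longlonglongrightarrow> a0" using tendsto_fst[OF lim] q0 by (simp add: o_def)
  have lb: "(\<lambda>n. snd (P (r n))) \<longlonglongrightarrow> b0" using tendsto_snd[OF lim] q0 by (simp add: o_def)
  have lpsi: "(\<lambda>n. psi (fst (P (r n)) - snd (P (r n)))) \<longlonglongrightarrow> psi (a0 - b0)"
    by (rule continuous_on_tendsto_compose[OF psi_cont]) (auto intro!: tendsto_diff la lb)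
  have Mle: "M \<le> \<Phi> a0 b0"
  proof (rule ccontr)
    assume "\<not> M \<le> \<Phi> a0 b0"
    define \<delta> where "\<delta> = (M - \<Phi> a0 b0) / 4"
    have d: "\<delta> > 0" using \<open>\<not> M \<le> \<Phi> a0 b0\<close> unfolding \<delta>_def by simp
    have e1: "eventually (\<lambda>n. U (fst (P (r n))) < U a0 + \<delta>) sequentially"
      using usc_seq[OF Uu la] d by simp
    have e2: "eventually (\<lambda>n. - V (snd (P (r n))) < - V b0 + \<delta>) sequentially"
      using usc_seq[OF Vu lb, of "- V b0 + \<delta>"] d by simp
    have e3: "eventually (\<lambda>n. psi (a0 - b0) - \<delta> / c < psi (fst (P (r n)) - snd (P (r n)))) sequentially"
      using lpsi d c by (intro order_tendstoD) auto
    have e4: "eventually (\<lambda>n. 1 / (real n + 1) < \<delta>) sequentially"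
    proof -
      have "(\<lambda>n. 1 / (real n + 1)) \<longlonglongrightarrow> 0" using LIMSEQ_inverse_real_of_nat by (simp add: inverse_eq_divide add.commute)
      then show ?thesis using d by (intro order_tendstoD) auto
    qed
    from eventually_conj[OF e1 eventually_conj[OF e2 eventually_conj[OF e3 e4]]]
    obtain N where N: "U (fst (P (r N))) < U a0 + \<delta>" "- V (snd (P (r N))) < - V b0 + \<delta>"
        "psi (a0 - b0) - \<delta> / c < psi (fst (P (r N)) - snd (P (r N)))" "1 / (real N + 1) < \<delta>"
      unfolding eventually_sequentially by blast
    have "1 / (real (r N) + 1) \<le> 1 / (real N + 1)"
      using seq_suble[OF r, of N] by (intro divide_left_mono) auto
    moreover have "c * (psi (a0 - b0) - \<delta> / c) < c * psi (fst (P (r N)) - snd (P (r N)))"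
      using N(3) c by simp
    ultimately have "M - \<delta> < \<Phi> a0 b0 + 3 * \<delta>"
      using P(2)[of "r N"] N c unfolding \<Phi>_def by (simp add: right_diff_distrib)
    then show False unfolding \<delta>_def by (simp add: field_simps)
  qed
  obtain l where l: "l \<in> int_lattice" "\<And>i. \<bar>(a0 - (b0 + l)) $ i\<bar> \<le> 1/2"
    using red_half by blast
  have "a0 \<in> cbox 0 1" using q q0 S_def by auto
  moreover have "\<Phi> x y \<le> \<Phi> a0 (b0 + l)" for x y
  proof -
    obtain l1 where l1: "l1 \<in> int_lattice" "x + l1 \<in> cbox 0 1" using red_box by blast
    obtain l2 where l2: "l2 \<in> int_lattice" "y + l2 \<in> cbox 0 1" using red_box by blast
    have "\<Phi> x y = \<Phi> (x + l1) (y + l2)" using per l1 l2 by simp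
    also have "\<dots> \<le> M" unfolding M_def using l1 l2 bdd S_def
      by (intro cSUP_upper2[where x="(x + l1, y + l2)"]) auto
    also have "\<dots> \<le> \<Phi> a0 b0" by (rule Mle)
    also have "\<dots> = \<Phi> (a0 + 0) (b0 + l)" using per[OF lattice_zero l(1)] by simp
    finally show ?thesis by simp
  qed
  ultimately show ?thesis using l(2) unfolding \<Phi>_def by blast
qed



lemma norm_le_sqrt_psi:
  fixes z :: "real ^ 'd"
  assumes "\<And>i. \<bar>z $ i\<bar> \<le> 1/2"
  shows "norm z \<le> sqrt (psi z)"
proof -
  have "norm z = sqrt (\<Sum>i\<in>UNIV. (z $ i)^2)"
    unfolding norm_vec_def L2_set_def by simp
  also have "\<dots> \<le> sqrt (psi z)"
    unfolding psi_def using assms by (intro real_sqrt_le_mono sum_mono sin_pi_lower) auto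
  finally show ?thesis .
qed

lemma sbm_mult:
  fixes f g :: "real \<Rightarrow> real"
  assumes "set_borel_measurable M A f" "set_borel_measurable M A g"
  shows "set_borel_measurable M A (\<lambda>x. f x * g x)"
proof -
  have "(\<lambda>x. indicator A x * f x * (indicator A x * g x)) \<in> borel_measurable M"
  proof -
    have f: "(\<lambda>x. indicator A x * f x) \<in> borel_measurable M" using assms(1) unfolding set_borel_measurable_def by simp
    have g: "(\<lambda>x. indicator A x * g x) \<in> borel_measurable M" using assms(2) unfolding set_borel_measurable_def by simp
    show ?thesis by (rule borel_measurable_times[OF f g])
  qed
  moreover have "(\<lambda>x. indicator A x * f x * (indicator A x * g x)) = (\<lambda>x. indicator A x * (f x * g x))"
    by (auto simp: indicator_def)
  ultimately show ?thesis unfolding set_borel_measurable_def by simp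
qed

lemma sbm_diff:
  fixes f g :: "real \<Rightarrow> real"
  assumes "set_borel_measurable M A f" "set_borel_measurable M A g"
  shows "set_borel_measurable M A (\<lambda>x. f x - g x)"
proof -
  have "(\<lambda>x. indicator A x * f x - (indicator A x * g x)) \<in> borel_measurable M"
  proof -
    have f: "(\<lambda>x. indicator A x * f x) \<in> borel_measurable M" using assms(1) unfolding set_borel_measurable_def by simp
    have g: "(\<lambda>x. indicator A x * g x) \<in> borel_measurable M" using assms(2) unfolding set_borel_measurable_def by simp
    show ?thesis by (rule borel_measurable_diff[OF f g])
  qed
  moreover have "(\<lambda>x. indicator A x * f x - (indicator A x * g x)) = (\<lambda>x. indicator A x * (f x - g x))"
    by (auto simp: indicator_def)
  ultimately show ?thesis unfolding set_borel_measurable_def by simp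
qed

lemma sbm_const:
  assumes "A \<in> sets M"
  shows "set_borel_measurable M A (\<lambda>x. c :: real)"
  unfolding set_borel_measurable_def using assms by measurable

lemma sbm_uminus:
  assumes "set_borel_measurable M A (\<lambda>x. - f x :: real)"
  shows "set_borel_measurable M A f"
proof -
  have "(\<lambda>x. - (indicator A x * - f x)) \<in> borel_measurable M"
    using assms unfolding set_borel_measurable_def by (intro borel_measurable_uminus) auto
  then show ?thesis unfolding set_borel_measurable_def by simp
qed

lemma si_const:
  assumes "A \<in> sets M" "emeasure M A < \<infinity>"
  shows "set_integrable M A (\<lambda>x. c :: real)"
  unfolding set_integrable_def using assms by (simp add: integrable_mult_left)

lemma si_bounded_mult:
  fixes f g :: "real \<Rightarrow> real"
  assumes "set_integrable M A g" "set_borel_measurable M A f" "set_borel_measurable M A g"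
    and "\<And>x. x \<in> A \<Longrightarrow> \<bar>f x\<bar> \<le> B"
  shows "set_integrable M A (\<lambda>x. f x * g x)"
proof (rule set_integrable_bound[where f="\<lambda>x. B * g x"])
  show "set_integrable M A (\<lambda>x. B * g x)" using assms(1) by auto
  show "set_borel_measurable M A (\<lambda>x. f x * g x)" by (rule sbm_mult[OF assms(2,3)])
  show "AE x in M. x \<in> A \<longrightarrow> norm (f x * g x) \<le> norm (B * g x)"
  proof (rule AE_I2, intro impI)
    fix x assume x: "x \<in> A"
    have "\<bar>f x\<bar> * \<bar>g x\<bar> \<le> B * \<bar>g x\<bar>" using assms(4)[OF x] by (intro mult_right_mono) auto
    moreover have "B \<ge> 0" using assms(4)[OF x] by linarith
    ultimately show "norm (f x * g x) \<le> norm (B * g x)" by (simp add: abs_mult)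
  qed
qed

lemma si_uminus:
  assumes "set_integrable M A (\<lambda>x. - f x :: real)"
  shows "set_integrable M A f"
  using set_integrable_mult_right[of "-1" M A "\<lambda>x. - f x"] assms by simp

lemma si_ind:
  assumes "set_integrable M A (g :: _ \<Rightarrow> real)"
  shows "set_integrable M A (\<lambda>x. indicator A x * g x)"
proof -
  have "(\<lambda>x. indicator A x *\<^sub>R (indicator A x * g x)) = (\<lambda>x. indicator A x *\<^sub>R g x)"
    by (auto simp: indicator_def)
  then show ?thesis using assms unfolding set_integrable_def by simp
qed

lemma sint_ind:
  "(LINT x:A|M. indicator A x * g x) = (LINT x:A|M. (g x :: real))"
proof -
  have "(\<lambda>x. indicator A x *\<^sub>R (indicator A x * g x)) = (\<lambda>x. indicator A x *\<^sub>R g x)"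
    by (auto simp: indicator_def)
  then show ?thesis unfolding set_lebesgue_integral_def by simp
qed

lemma sint_const_le:
  fixes f :: "real \<Rightarrow> real"
  assumes "A \<in> sets M" "emeasure M A < \<infinity>" "measure M A = 1" "set_integrable M A f"
    and "\<And>x. x \<in> A \<Longrightarrow> c \<le> f x"
  shows "c \<le> (LINT x:A|M. f x)"
proof -
  have "(LINT x:A|M. c) \<le> (LINT x:A|M. f x)"
    using assms by (intro set_integral_mono si_const) auto
  moreover have "(LINT x:A|M. c) = c" using assms set_integral_const[of A M c] by simp
  ultimately show ?thesis by simp
qed

lemma sint_le_const:
  fixes f :: "real \<Rightarrow> real"
  assumes "A \<in> sets M" "emeasure M A < \<infinity>" "measure M A = 1" "set_integrable M A f"
    and "\<And>x. x \<in> A \<Longrightarrow> f x \<le> c"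
  shows "(LINT x:A|M. f x) \<le> c"
proof -
  have "(LINT x:A|M. f x) \<le> (LINT x:A|M. c)"
    using assms by (intro set_integral_mono si_const) auto
  moreover have "(LINT x:A|M. c) = c" using assms set_integral_const[of A M c] by simp
  ultimately show ?thesis by simp
qed



lemma core:
  fixes I :: "real set" and k :: "real \<Rightarrow> real \<Rightarrow> real"
    and H :: "real ^ 'd \<Rightarrow> real ^ 'd \<Rightarrow> real \<Rightarrow> real"
    and u v :: "real ^ 'd \<Rightarrow> real \<Rightarrow> real"
  assumes Is: "I \<in> sets lborel" and Ifin: "emeasure lborel I < \<infinity>" and Im: "measure lborel I = 1"
    and kmeas: "set_borel_measurable lborel I (k \<xi>)"
    and k0: "0 < k0" and kb: "\<And>\<eta>. \<eta> \<in> I \<Longrightarrow> k0 \<le> k \<xi> \<eta> \<and> k \<xi> \<eta> \<le> k1"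
    and xi: "\<xi> \<in> I"
    and C1: "C1 > 0" and C2: "C2 > 0" and m: "m > 1"
    and B1: "\<And>x p. C1 * norm p powr m - C2 \<le> H x p \<xi>"
    and B2: "\<forall>R>0. \<exists>\<omega>. modulus \<omega> \<and> (\<forall>x y p. \<forall>\<xi>\<in>I. norm p \<le> R \<longrightarrow> \<bar>H x p \<xi> - H y p \<xi>\<bar> \<le> \<omega> (dist x y))"
    and alpha: "\<alpha> > 0"
    and u_sub: "visc_sub I \<alpha> H k u" and v_super: "visc_super I \<alpha> H k v"
    and Cu: "Cu \<ge> 0" "\<And>x \<eta>. \<eta> \<in> I \<Longrightarrow> u x \<eta> \<le> Cu"
    and Cv: "Cv \<ge> 0" "\<And>x \<eta>. \<eta> \<in> I \<Longrightarrow> - v x \<eta> \<le> Cv"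
    and th: "\<And>x \<eta>. \<eta> \<in> I \<Longrightarrow> u x \<eta> - v x \<eta> \<le> \<theta>"
  shows "(\<alpha> + (LINT \<eta>:I|lborel. k \<xi> \<eta>)) * (u z \<xi> - v z \<xi>) \<le> (LINT \<eta>:I|lborel. k \<xi> \<eta>) * \<theta>
      \<and> k0 \<le> (LINT \<eta>:I|lborel. k \<xi> \<eta>) \<and> (LINT \<eta>:I|lborel. k \<xi> \<eta>) \<le> k1"
proof -
  define K where "K = (LINT \<eta>:I|lborel. k \<xi> \<eta>)"
  have k1: "k1 > 0" using kb[OF xi] k0 by linarith
  have uP: "Uplus I u" using u_sub unfolding visc_sub_def by blast
  have vP: "Uplus I (\<lambda>x \<xi>. - v x \<xi>)" using v_super unfolding visc_super_def Uminus_def by blast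
  have uint: "set_integrable lborel I (u x)" for x using uP unfolding Uplus_def by blast
  have umeas: "set_borel_measurable lborel I (u x)" for x using uP unfolding Uplus_def by blast
  have vint: "set_integrable lborel I (v x)" for x
  proof -
    from vP have "set_integrable lborel I (\<lambda>\<xi>. - v x \<xi>)" unfolding Uplus_def by blast
    then show ?thesis by (rule si_uminus)
  qed
  have vmeas: "set_borel_measurable lborel I (v x)" for x
  proof -
    from vP have "set_borel_measurable lborel I (\<lambda>\<xi>. - v x \<xi>)" unfolding Uplus_def by blast
    then show ?thesis by (rule sbm_uminus)
  qed
  have uusc: "\<eta> \<in> I \<Longrightarrow> usc (\<lambda>x. u x \<eta>)" for \<eta> using uP unfolding Uplus_def by blast
  have vusc: "\<eta> \<in> I \<Longrightarrow> usc (\<lambda>x. - v x \<eta>)" for \<eta> using vP unfolding Uplus_def by blast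
  have uper: "periodic_fn (\<lambda>x. u x \<xi>)" using uP xi unfolding Uplus_def by blast
  have vper: "periodic_fn (\<lambda>x. v x \<xi>)"
    using vP xi unfolding Uplus_def periodic_fn_def by simp
  have kabs: "\<eta> \<in> I \<Longrightarrow> \<bar>k \<xi> \<eta>\<bar> \<le> k1" for \<eta> using kb[of \<eta>] k0 by auto
  have kint: "set_integrable lborel I (k \<xi>)"
    using si_bounded_mult[OF si_const[OF Is Ifin, of 1] kmeas sbm_const[OF Is] kabs] by simp
  have kuint: "set_integrable lborel I (\<lambda>\<eta>. k \<xi> \<eta> * u x \<eta>)" for x
    by (rule si_bounded_mult[OF uint kmeas umeas kabs])
  have kvint: "set_integrable lborel I (\<lambda>\<eta>. k \<xi> \<eta> * v x \<eta>)" for x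
    by (rule si_bounded_mult[OF vint kmeas vmeas kabs])
  have Kge: "k0 \<le> K" unfolding K_def using kb by (intro sint_const_le[OF Is Ifin Im kint]) auto
  have Kle: "K \<le> k1" unfolding K_def using kb by (intro sint_le_const[OF Is Ifin Im kint]) auto
  have split: "(LINT \<eta>:I|lborel. k \<xi> \<eta> * (w x \<xi> - w x \<eta>)) = w x \<xi> * K - (LINT \<eta>:I|lborel. k \<xi> \<eta> * w x \<eta>)"
    if "set_integrable lborel I (\<lambda>\<eta>. k \<xi> \<eta> * w x \<eta>)" for w :: "real ^ 'd \<Rightarrow> real \<Rightarrow> real" and x
  proof -
    have i1: "set_integrable lborel I (\<lambda>\<eta>. k \<xi> \<eta> * w x \<xi>)" using kint by auto
    have "(LINT \<eta>:I|lborel. k \<xi> \<eta> * (w x \<xi> - w x \<eta>)) = (LINT \<eta>:I|lborel. k \<xi> \<eta> * w x \<xi> - k \<xi> \<eta> * w x \<eta>)"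
      by (simp add: right_diff_distrib)
    also have "\<dots> = (LINT \<eta>:I|lborel. k \<xi> \<eta> * w x \<xi>) - (LINT \<eta>:I|lborel. k \<xi> \<eta> * w x \<eta>)"
      by (rule set_integral_diff(2)[OF i1 that])
    also have "(LINT \<eta>:I|lborel. k \<xi> \<eta> * w x \<xi>) = w x \<xi> * K"
      unfolding K_def by (simp add: mult.commute)
    finally show ?thesis .
  qed
  have usubI: "\<And>\<phi> D\<phi> \<xi>' xh. C1_torus \<phi> D\<phi> \<Longrightarrow> \<xi>' \<in> I \<Longrightarrow> loc_max (\<lambda>x. u x \<xi>' - \<phi> x) xh \<Longrightarrow>
        \<alpha> * u xh \<xi>' + H xh (D\<phi> xh) \<xi>' + (LINT \<eta>:I|lborel. k \<xi>' \<eta> * (u xh \<xi>' - u xh \<eta>)) \<le> 0"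
    using u_sub unfolding visc_sub_def by blast
  have vsupI: "\<And>\<phi> D\<phi> \<xi>' xh. C1_torus \<phi> D\<phi> \<Longrightarrow> \<xi>' \<in> I \<Longrightarrow> loc_min (\<lambda>x. v x \<xi>' - \<phi> x) xh \<Longrightarrow>
        \<alpha> * v xh \<xi>' + H xh (D\<phi> xh) \<xi>' + (LINT \<eta>:I|lborel. k \<xi>' \<eta> * (v xh \<xi>' - v xh \<eta>)) \<ge> 0"
    using v_super unfolding visc_super_def by blast
  define c :: "nat \<Rightarrow> real" where "c n = real n + 1" for n
  have cpos: "c n > 0" for n unfolding c_def by simp
  define U where "U x = u x \<xi>" for x
  define V where "V y = v y \<xi>" for y
  have "\<exists>a b. a \<in> cbox 0 1 \<and> (\<forall>i. \<bar>(a - b) $ i\<bar> \<le> 1/2) \<and>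
     (\<forall>x y. U x - V y - c n * psi (x - y) \<le> U a - V b - c n * psi (a - b))" for n
    unfolding U_def V_def
    by (rule exists_max[OF uusc[OF xi] vusc[OF xi] uper vper Cu(2)[OF xi] Cv(2)[OF xi] cpos])
  then obtain A B where AB: "\<And>n. A n \<in> cbox 0 1" "\<And>n i. \<bar>(A n - B n) $ i\<bar> \<le> 1/2"
     "\<And>n x y. U x - V y - c n * psi (x - y) \<le> U (A n) - V (B n) - c n * psi (A n - B n)"
    by metis
  define p where "p n = c n *\<^sub>R Dpsi (A n - B n)" for n
  have Sineq: "\<alpha> * u (A n) \<xi> + H (A n) (p n) \<xi> + (LINT \<eta>:I|lborel. k \<xi> \<eta> * (u (A n) \<xi> - u (A n) \<eta>)) \<le> 0" for n
  proof -
    define \<phi> where "\<phi> x = c n * psi (x - B n) + V (B n)" for x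
    define D\<phi> where "D\<phi> x = c n *\<^sub>R Dpsi (x - B n)" for x
    have C1t: "C1_torus \<phi> D\<phi>"
      unfolding C1_torus_def
    proof (intro conjI allI)
      show "periodic_fn \<phi>" unfolding periodic_fn_def \<phi>_def
      proof (intro allI ballI)
        fix x z :: "real ^ 'd" assume z: "z \<in> int_lattice"
        have "psi (x + z - B n) = psi ((x - B n) + z)" by (rule arg_cong[where f=psi]) (simp add: algebra_simps)
        also have "\<dots> = psi (x - B n)" by (rule psi_periodic[OF z])
        finally show "c n * psi (x + z - B n) + V (B n) = c n * psi (x - B n) + V (B n)" by simp
      qed
      show "continuous_on UNIV D\<phi>" unfolding D\<phi>_def
        by (intro continuous_on_scaleR continuous_on_const continuous_on_compose2[OF Dpsi_cont]) (auto intro!: continuous_intros)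
      fix x
      have "((\<lambda>x. c n * psi (x - B n)) has_derivative (\<lambda>h. c n * (Dpsi (x - B n) \<bullet> h))) (at x)"
        by (rule has_derivative_mult_right[OF psi_deriv])
      then have "(\<phi> has_derivative (\<lambda>h. c n * (Dpsi (x - B n) \<bullet> h))) (at x)"
        unfolding \<phi>_def by (rule has_derivative_add_const)
      then show "(\<phi> has_derivative (\<lambda>h. D\<phi> x \<bullet> h)) (at x)" unfolding D\<phi>_def by simp
    qed
    have lm: "loc_max (\<lambda>x. u x \<xi> - \<phi> x) (A n)"
      unfolding loc_max_def
    proof (intro exI[of _ 1] conjI allI impI)
      fix y
      show "u y \<xi> - \<phi> y \<le> u (A n) \<xi> - \<phi> (A n)"
        using AB(3)[of y "B n" n] unfolding \<phi>_def U_def by simp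
    qed simp
    have "D\<phi> (A n) = p n" unfolding D\<phi>_def p_def by simp
    then show ?thesis using usubI[OF C1t xi lm] by simp
  qed
  have Pineq: "\<alpha> * v (B n) \<xi> + H (B n) (p n) \<xi> + (LINT \<eta>:I|lborel. k \<xi> \<eta> * (v (B n) \<xi> - v (B n) \<eta>)) \<ge> 0" for n
  proof -
    define \<phi> where "\<phi> y = (- c n) * psi (A n - y) + U (A n)" for y
    define D\<phi> where "D\<phi> y = c n *\<^sub>R Dpsi (A n - y)" for y
    have C1t: "C1_torus \<phi> D\<phi>"
      unfolding C1_torus_def
    proof (intro conjI allI)
      show "periodic_fn \<phi>" unfolding periodic_fn_def \<phi>_def
      proof (intro allI ballI)
        fix x z :: "real ^ 'd" assume z: "z \<in> int_lattice"
        have z': "0 - z \<in> int_lattice" by (rule lattice_diff[OF lattice_zero z])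
        have "psi (A n - (x + z)) = psi ((A n - x) + (0 - z))" by (rule arg_cong[where f=psi]) (simp add: algebra_simps)
        also have "\<dots> = psi (A n - x)" by (rule psi_periodic[OF z'])
        finally show "(- c n) * psi (A n - (x + z)) + U (A n) = (- c n) * psi (A n - x) + U (A n)" by simp
      qed
      show "continuous_on UNIV D\<phi>" unfolding D\<phi>_def
        by (intro continuous_on_scaleR continuous_on_const continuous_on_compose2[OF Dpsi_cont]) (auto intro!: continuous_intros)
      fix x
      have "((\<lambda>y. (- c n) * psi (A n - y)) has_derivative (\<lambda>h. (- c n) * ((- Dpsi (A n - x)) \<bullet> h))) (at x)"
        by (rule has_derivative_mult_right[OF psi_deriv2])
      then have "(\<phi> has_derivative (\<lambda>h. (- c n) * ((- Dpsi (A n - x)) \<bullet> h))) (at x)"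
        unfolding \<phi>_def by (rule has_derivative_add_const)
      then show "(\<phi> has_derivative (\<lambda>h. D\<phi> x \<bullet> h)) (at x)" unfolding D\<phi>_def by simp
    qed
    have lm: "loc_min (\<lambda>y. v y \<xi> - \<phi> y) (B n)"
      unfolding loc_min_def
    proof (intro exI[of _ 1] conjI allI impI)
      fix y
      show "v (B n) \<xi> - \<phi> (B n) \<le> v y \<xi> - \<phi> y"
        using AB(3)[of "A n" y n] unfolding \<phi>_def V_def by simp
    qed simp
    have "D\<phi> (B n) = p n" unfolding D\<phi>_def p_def by simp
    then show ?thesis using vsupI[OF C1t xi lm] by simp
  qed
  have kdint: "set_integrable lborel I (\<lambda>\<eta>. k \<xi> \<eta> * (w x \<xi> - w x \<eta>))"
    if "set_integrable lborel I (\<lambda>\<eta>. k \<xi> \<eta> * w x \<eta>)" for w :: "real ^ 'd \<Rightarrow> real \<Rightarrow> real" and x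
  proof -
    have i1: "set_integrable lborel I (\<lambda>\<eta>. k \<xi> \<eta> * w x \<xi>)" using kint by auto
    have "set_integrable lborel I (\<lambda>\<eta>. k \<xi> \<eta> * w x \<xi> - k \<xi> \<eta> * w x \<eta>)"
      by (rule set_integral_diff(1)[OF i1 that])
    moreover have "(\<lambda>\<eta>. k \<xi> \<eta> * w x \<xi> - k \<xi> \<eta> * w x \<eta>) = (\<lambda>\<eta>. k \<xi> \<eta> * (w x \<xi> - w x \<eta>))"
      by (simp add: right_diff_distrib)
    ultimately show ?thesis by simp
  qed
  have Dlow: "U z - V z \<le> U (A n) - V (B n)" for z n
  proof -
    have "0 \<le> c n * psi (A n - B n)" using cpos[of n] psi_nonneg[of "A n - B n"] by (metis mult_nonneg_nonneg less_imp_le)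
    moreover have "c n * psi (z - z) = 0" by (simp add: psi_0)
    ultimately show ?thesis using AB(3)[of z z n] by linarith
  qed
  have Uup: "U x \<le> Cu" for x unfolding U_def using Cu(2)[OF xi] .
  have Vlow: "- V x \<le> Cv" for x unfolding V_def using Cv(2)[OF xi] .
  define L where "L = U 0 - V 0 - Cv"
  have UAL: "L \<le> U (A n)" for n using Dlow[of 0 n] Vlow[of "B n"] unfolding L_def by linarith
  define M0 where "M0 = Cu + Cv - (U 0 - V 0)"
  have psib: "c n * psi (A n - B n) \<le> M0" for n
  proof -
    have "c n * psi ((0::real^'d) - 0) = 0" by (simp add: psi_0)
    then show ?thesis using AB(3)[of 0 0 n] Uup[of "A n"] Vlow[of "B n"] unfolding M0_def by linarith
  qed
  define c0 where "c0 = \<bar>L\<bar> + Cu"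
  have c0: "c0 \<ge> 0" unfolding c0_def using Cu by simp
  define Ah where "Ah = \<alpha> * c0 + k1 * c0"
  have Hb: "H (A n) (p n) \<xi> \<le> Ah" for n
  proof -
    have low: "- (k1 * c0) \<le> (LINT \<eta>:I|lborel. k \<xi> \<eta> * (u (A n) \<xi> - u (A n) \<eta>))"
    proof (rule sint_const_le[OF Is Ifin Im kdint[OF kuint]])
      fix \<eta> assume \<eta>: "\<eta> \<in> I"
      have d: "- c0 \<le> u (A n) \<xi> - u (A n) \<eta>"
        using UAL[of n] Cu(2)[OF \<eta>, of "A n"] abs_ge_minus_self[of L] unfolding U_def c0_def by linarith
      have k0': "0 \<le> k \<xi> \<eta>" using kb[OF \<eta>] k0 by linarith
      have "k \<xi> \<eta> * (- c0) \<le> k \<xi> \<eta> * (u (A n) \<xi> - u (A n) \<eta>)" by (rule mult_left_mono[OF d k0'])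
      moreover have "k1 * (- c0) \<le> k \<xi> \<eta> * (- c0)" using kb[OF \<eta>] c0 by (intro mult_right_mono_neg) auto
      ultimately show "- (k1 * c0) \<le> k \<xi> \<eta> * (u (A n) \<xi> - u (A n) \<eta>)" by simp
    qed
    have lowA: "- c0 \<le> u (A n) \<xi>"
      using UAL[of n] Cu(1) abs_ge_minus_self[of L] unfolding U_def c0_def by linarith
    have "\<alpha> * (- c0) \<le> \<alpha> * u (A n) \<xi>"
      using lowA alpha by (intro mult_left_mono) auto
    then show ?thesis using Sineq[of n] low unfolding Ah_def by simp
  qed
  define R where "R = max 1 ((Ah + C2) / C1)"
  have Rpos: "R > 0" unfolding R_def by simp
  have pR: "norm (p n) \<le> R" for n
  proof (cases "norm (p n) \<le> 1")
    case True then show ?thesis unfolding R_def by simp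
  next
    case False
    then have "norm (p n) powr 1 \<le> norm (p n) powr m" using m by (intro powr_mono) auto
    then have "norm (p n) \<le> norm (p n) powr m" by simp
    then have "C1 * norm (p n) \<le> C1 * norm (p n) powr m" using C1 by simp
    also have "\<dots> \<le> Ah + C2" using B1[where x="A n" and p="p n"] Hb[of n] by simp
    finally have "norm (p n) \<le> (Ah + C2) / C1" using C1 by (simp add: pos_le_divide_eq mult.commute)
    then show ?thesis unfolding R_def by simp
  qed
  obtain \<omega> where om: "modulus \<omega>"
    and omH: "\<And>x y q. norm q \<le> R \<Longrightarrow> \<bar>H x q \<xi> - H y q \<xi>\<bar> \<le> \<omega> (dist x y)"
    using B2 Rpos xi by blast
  define J where "J n = (LINT \<eta>:I|lborel. k \<xi> \<eta> * (u (A n) \<eta> - v (B n) \<eta>))" for n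
  have main: "(\<alpha> + K) * (U z - V z) \<le> \<omega> (dist (A n) (B n)) + J n" for z n
  proof -
    have sU: "(LINT \<eta>:I|lborel. k \<xi> \<eta> * (u (A n) \<xi> - u (A n) \<eta>)) = u (A n) \<xi> * K - (LINT \<eta>:I|lborel. k \<xi> \<eta> * u (A n) \<eta>)"
      by (rule split[OF kuint])
    have sV: "(LINT \<eta>:I|lborel. k \<xi> \<eta> * (v (B n) \<xi> - v (B n) \<eta>)) = v (B n) \<xi> * K - (LINT \<eta>:I|lborel. k \<xi> \<eta> * v (B n) \<eta>)"
      by (rule split[OF kvint])
    have sJ: "J n = (LINT \<eta>:I|lborel. k \<xi> \<eta> * u (A n) \<eta>) - (LINT \<eta>:I|lborel. k \<xi> \<eta> * v (B n) \<eta>)"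
    proof -
      have "J n = (LINT \<eta>:I|lborel. k \<xi> \<eta> * u (A n) \<eta> - k \<xi> \<eta> * v (B n) \<eta>)"
        unfolding J_def by (simp add: right_diff_distrib)
      also have "\<dots> = (LINT \<eta>:I|lborel. k \<xi> \<eta> * u (A n) \<eta>) - (LINT \<eta>:I|lborel. k \<xi> \<eta> * v (B n) \<eta>)"
        by (rule set_integral_diff(2)[OF kuint kvint])
      finally show ?thesis .
    qed
    have Hd: "H (B n) (p n) \<xi> - H (A n) (p n) \<xi> \<le> \<omega> (dist (A n) (B n))"
      using omH[OF pR[of n], of "A n" "B n"] by simp
    have e: "(\<alpha> + K) * (u (A n) \<xi> - v (B n) \<xi>) = \<alpha> * u (A n) \<xi> + u (A n) \<xi> * K - (\<alpha> * v (B n) \<xi> + v (B n) \<xi> * K)"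
      by (simp add: algebra_simps)
    have "(\<alpha> + K) * (U z - V z) \<le> (\<alpha> + K) * (U (A n) - V (B n))"
      using Dlow[of z n] alpha Kge k0 by (intro mult_left_mono) auto
    also have "\<dots> \<le> \<omega> (dist (A n) (B n)) + J n"
      using Sineq[of n] Pineq[of n] sU sV sJ Hd e unfolding U_def V_def by linarith
    finally show ?thesis .
  qed
  have inv0: "(\<lambda>n. 1 / (real n + 1)) \<longlonglongrightarrow> 0"
    using LIMSEQ_inverse_real_of_nat by (simp add: inverse_eq_divide add.commute)
  have M0nn: "0 \<le> M0"
  proof -
    have "0 \<le> c 0 * psi (A 0 - B 0)" using cpos[of 0] psi_nonneg[of "A 0 - B 0"] by (metis mult_nonneg_nonneg less_imp_le)
    then show ?thesis using psib[of 0] by linarith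
  qed
  have dist_bd: "dist (A n) (B n) \<le> sqrt (M0 * (1 / (real n + 1)))" for n
  proof -
    have "dist (A n) (B n) = norm (A n - B n)" by (simp add: dist_norm)
    also have "\<dots> \<le> sqrt (psi (A n - B n))" by (rule norm_le_sqrt_psi[OF AB(2)])
    also have "psi (A n - B n) \<le> M0 * (1 / (real n + 1))"
      using psib[of n] cpos[of n] unfolding c_def by (simp add: field_simps)
    then have "sqrt (psi (A n - B n)) \<le> sqrt (M0 * (1 / (real n + 1)))" by (rule real_sqrt_le_mono)
    finally show ?thesis .
  qed
  have dlim: "(\<lambda>n. dist (A n) (B n)) \<longlonglongrightarrow> 0"
  proof (rule tendsto_sandwich[of "\<lambda>_. 0" _ _ "\<lambda>n. sqrt (M0 * (1 / (real n + 1)))"])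
    show "\<forall>\<^sub>F n in sequentially. 0 \<le> dist (A n) (B n)" by simp
    show "\<forall>\<^sub>F n in sequentially. dist (A n) (B n) \<le> sqrt (M0 * (1 / (real n + 1)))" using dist_bd by simp
    show "(\<lambda>n. 0::real) \<longlonglongrightarrow> 0" by simp
    have "(\<lambda>n. sqrt (M0 * (1 / (real n + 1)))) \<longlonglongrightarrow> sqrt (M0 * 0)"
      by (intro tendsto_real_sqrt tendsto_mult tendsto_const inv0)
    then show "(\<lambda>n. sqrt (M0 * (1 / (real n + 1)))) \<longlonglongrightarrow> 0" by simp
  qed
  have "seq_compact (cbox (0::real^'d) 1)" by (intro compact_imp_seq_compact compact_cbox)
  then obtain xb r where xb: "xb \<in> cbox 0 1" and r: "strict_mono (r :: nat \<Rightarrow> nat)" and Alim: "(A \<circ> r) \<longlonglongrightarrow> xb"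
    using AB(1) by (metis seq_compactE)
  have Ar: "(\<lambda>n. A (r n)) \<longlonglongrightarrow> xb" using Alim by (simp add: o_def)
  have dr: "(\<lambda>n. dist (A (r n)) (B (r n))) \<longlonglongrightarrow> 0"
    using LIMSEQ_subseq_LIMSEQ[OF dlim r] by (simp add: o_def)
  have "(\<lambda>n. A (r n) - B (r n)) \<longlonglongrightarrow> 0"
    using dr by (simp add: tendsto_dist_iff[of "\<lambda>n. A (r n) - B (r n)"] dist_norm)
  from tendsto_diff[OF Ar this] have Br: "(\<lambda>n. B (r n)) \<longlonglongrightarrow> xb" by simp
  define f where "f n \<eta> = indicator I \<eta> * (k \<xi> \<eta> * (u (A (r n)) \<eta> - v (B (r n)) \<eta>))" for n \<eta>
  define cc where "cc \<eta> = indicator I \<eta> * (k \<xi> \<eta> * \<theta>)" for \<eta>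
  define Bd where "Bd = k1 * (Cu + Cv) + k1 * \<bar>\<theta>\<bar>"
  have kdiff: "set_integrable lborel I (\<lambda>\<eta>. k \<xi> \<eta> * (u x \<eta> - v y \<eta>))" for x y
  proof -
    have "set_integrable lborel I (\<lambda>\<eta>. k \<xi> \<eta> * u x \<eta> - k \<xi> \<eta> * v y \<eta>)"
      by (rule set_integral_diff(1)[OF kuint kvint])
    moreover have "(\<lambda>\<eta>. k \<xi> \<eta> * u x \<eta> - k \<xi> \<eta> * v y \<eta>) = (\<lambda>\<eta>. k \<xi> \<eta> * (u x \<eta> - v y \<eta>))"
      by (simp add: right_diff_distrib)
    ultimately show ?thesis by simp
  qed
  have fm: "f n \<in> borel_measurable lborel" for n
    using sbm_mult[OF kmeas sbm_diff[OF umeas vmeas]] unfolding f_def set_borel_measurable_def by simp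
  have ccm: "cc \<in> borel_measurable lborel"
    using sbm_mult[OF kmeas sbm_const[OF Is]] unfolding cc_def set_borel_measurable_def by simp
  have fi: "set_integrable lborel I (f n)" for n
    unfolding f_def by (rule si_ind[OF kdiff])
  have Bd0: "k1 * (Cu + Cv) \<ge> 0" using k1 Cu Cv by simp
  have Bd1: "k1 * \<bar>\<theta>\<bar> \<ge> 0" using k1 by simp
  have fB: "f n \<eta> \<le> Bd" for n \<eta>
  proof (cases "\<eta> \<in> I")
    case True
    have k0': "0 \<le> k \<xi> \<eta>" using kb[OF True] k0 by linarith
    have "u (A (r n)) \<eta> - v (B (r n)) \<eta> \<le> Cu + Cv" using Cu(2)[OF True] Cv(2)[OF True] by (smt (verit))
    then have "k \<xi> \<eta> * (u (A (r n)) \<eta> - v (B (r n)) \<eta>) \<le> k \<xi> \<eta> * (Cu + Cv)" using k0' by (rule mult_left_mono)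
    also have "\<dots> \<le> k1 * (Cu + Cv)" using kb[OF True] Cu Cv by (intro mult_right_mono) auto
    finally have "k \<xi> \<eta> * (u (A (r n)) \<eta> - v (B (r n)) \<eta>) \<le> k1 * (Cu + Cv)" .
    moreover have "f n \<eta> = k \<xi> \<eta> * (u (A (r n)) \<eta> - v (B (r n)) \<eta>)" using True unfolding f_def by simp
    ultimately show ?thesis using Bd1 unfolding Bd_def by linarith
  next
    case False then show ?thesis using Bd0 Bd1 unfolding f_def Bd_def by simp
  qed
  have cB: "\<bar>cc \<eta>\<bar> \<le> Bd" for \<eta>
  proof (cases "\<eta> \<in> I")
    case True
    have "\<bar>k \<xi> \<eta>\<bar> * \<bar>\<theta>\<bar> \<le> k1 * \<bar>\<theta>\<bar>" using kabs[OF True] by (intro mult_right_mono) auto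
    then show ?thesis using True Bd0 unfolding cc_def Bd_def by (simp add: abs_mult)
  next
    case False then show ?thesis using Bd0 Bd1 unfolding cc_def Bd_def by simp
  qed
  have flim: "eventually (\<lambda>n. f n \<eta> \<le> cc \<eta> + \<delta>) sequentially" if d: "\<delta> > 0" for \<eta> \<delta>
  proof (cases "\<eta> \<in> I")
    case False then show ?thesis using d unfolding f_def cc_def by simp
  next
    case True
    define \<delta>' where "\<delta>' = \<delta> / (2 * k1)"
    have d': "\<delta>' > 0" unfolding \<delta>'_def using d k1 by simp
    have e1: "eventually (\<lambda>n. u (A (r n)) \<eta> < u xb \<eta> + \<delta>') sequentially"
      using usc_seq[OF uusc[OF True] Ar, of "u xb \<eta> + \<delta>'"] d' by simp
    have e2: "eventually (\<lambda>n. - v (B (r n)) \<eta> < - v xb \<eta> + \<delta>') sequentially"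
      using usc_seq[OF vusc[OF True] Br, of "- v xb \<eta> + \<delta>'"] d' by simp
    show ?thesis
      using eventually_conj[OF e1 e2]
    proof (rule eventually_mono)
      fix n assume *: "u (A (r n)) \<eta> < u xb \<eta> + \<delta>' \<and> - v (B (r n)) \<eta> < - v xb \<eta> + \<delta>'"
      have k0': "0 \<le> k \<xi> \<eta>" using kb[OF True] k0 by linarith
      have "u (A (r n)) \<eta> - v (B (r n)) \<eta> \<le> \<theta> + 2 * \<delta>'" using * th[OF True, of xb] by linarith
      then have "k \<xi> \<eta> * (u (A (r n)) \<eta> - v (B (r n)) \<eta>) \<le> k \<xi> \<eta> * (\<theta> + 2 * \<delta>')" using k0' by (rule mult_left_mono)
      also have "\<dots> = k \<xi> \<eta> * \<theta> + k \<xi> \<eta> * (2 * \<delta>')" by (simp add: distrib_left)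
      also have "k \<xi> \<eta> * (2 * \<delta>') \<le> k1 * (2 * \<delta>')" using kb[OF True] d' by (intro mult_right_mono) auto
      also have "k1 * (2 * \<delta>') = \<delta>" unfolding \<delta>'_def using k1 by simp
      finally show "f n \<eta> \<le> cc \<eta> + \<delta>" using True unfolding f_def cc_def by simp
    qed
  qed
  have Jr: "(LINT \<eta>:I|lborel. f n \<eta>) = J (r n)" for n unfolding f_def J_def by (rule sint_ind)
  have Kc: "(LINT \<eta>:I|lborel. cc \<eta>) = K * \<theta>" unfolding cc_def K_def sint_ind by simp
  have ev1: "eventually (\<lambda>n. J (r n) \<le> K * \<theta> + \<delta>) sequentially" if d: "\<delta> > 0" for \<delta>
    using rev_fatou[OF Is Ifin fm ccm fi fB cB flim d] unfolding Jr Kc by simp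
  have ev2: "eventually (\<lambda>n. \<omega> (dist (A (r n)) (B (r n))) < \<delta>) sequentially" if d: "\<delta> > 0" for \<delta>
  proof -
    have "(\<omega> \<longlongrightarrow> 0) (at_right 0)" and om0: "\<omega> 0 = 0" using om unfolding modulus_def by auto
    then have "eventually (\<lambda>y. \<omega> y < \<delta>) (at_right 0)" using d by (intro order_tendstoD(2)) auto
    then obtain b where b: "b > 0" "\<And>y. y > 0 \<Longrightarrow> y < b \<Longrightarrow> \<omega> y < \<delta>"
      unfolding eventually_at_right_field by auto
    have "eventually (\<lambda>n. dist (A (r n)) (B (r n)) < b) sequentially"
      using dr b(1) by (intro order_tendstoD(2)) auto
    then show ?thesis
    proof (rule eventually_mono)
      fix n assume "dist (A (r n)) (B (r n)) < b"
      then show "\<omega> (dist (A (r n)) (B (r n))) < \<delta>"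
        using b(2)[of "dist (A (r n)) (B (r n))"] om0 d by (cases "dist (A (r n)) (B (r n)) = 0") auto
    qed
  qed
  have "(\<alpha> + K) * (U z - V z) \<le> K * \<theta>"
  proof (rule field_le_epsilon)
    fix e :: real assume e: "e > 0"
    then have e2: "e / 2 > 0" by simp
    from eventually_conj[OF ev1[OF e2] ev2[OF e2]] obtain N where
      N: "J (r N) \<le> K * \<theta> + e / 2" "\<omega> (dist (A (r N)) (B (r N))) < e / 2"
      unfolding eventually_sequentially by blast
    show "(\<alpha> + K) * (U z - V z) \<le> K * \<theta> + e" using main[of z "r N"] N by linarith
  qed
  then show ?thesis using Kge Kle unfolding K_def U_def V_def by blast
qed



theorem mainTheorem4:
  fixes I :: "real set" and k :: "real \<Rightarrow> real \<Rightarrow> real"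
    and H :: "real ^ 'd \<Rightarrow> real ^ 'd \<Rightarrow> real \<Rightarrow> real"
    and u v :: "real ^ 'd \<Rightarrow> real \<Rightarrow> real"
    and \<alpha> k0 k1 :: real
  assumes I_interval: "is_interval I" and I_bounded: "bounded I" and I_length: "measure lborel I = 1"
    and k_meas: "set_borel_measurable borel (I \<times> I) (\<lambda>(\<xi>, \<eta>). k \<xi> \<eta>)"
    and k0_pos: "0 < k0" and k_bounds: "\<And>\<xi> \<eta>. \<xi> \<in> I \<Longrightarrow> \<eta> \<in> I \<Longrightarrow> k0 \<le> k \<xi> \<eta> \<and> k \<xi> \<eta> \<le> k1"
    and H_cont: "\<And>\<xi>. \<xi> \<in> I \<Longrightarrow> continuous_on UNIV (\<lambda>(x, p). H x p \<xi>)"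
    and H_periodic: "\<And>p \<xi>. \<xi> \<in> I \<Longrightarrow> periodic_fn (\<lambda>x. H x p \<xi>)"
    and H_meas: "\<And>x p. set_borel_measurable lborel I (H x p)"
    and H_bdd: "\<And>p. \<exists>C. \<forall>x. \<forall>\<xi>\<in>I. \<bar>H x p \<xi>\<bar> \<le> C"
    and B1: "\<exists>C1 C2 m. C1 > 0 \<and> C2 > 0 \<and> m > 1 \<and>
               (\<forall>x p. \<forall>\<xi>\<in>I. C1 * norm p powr m - C2 \<le> H x p \<xi>)"
    and B2: "\<forall>R>0. \<exists>\<omega>. modulus \<omega> \<and>
               (\<forall>x y p. \<forall>\<xi>\<in>I. norm p \<le> R \<longrightarrow> \<bar>H x p \<xi> - H y p \<xi>\<bar> \<le> \<omega> (dist x y))"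
    and alpha_pos: "\<alpha> > 0"
    and u_sub: "visc_sub I \<alpha> H k u"
    and v_super: "visc_super I \<alpha> H k v"
    and u_bdd: "\<exists>C. \<forall>x. \<forall>\<xi>\<in>I. u x \<xi> \<le> C"
    and v_bdd: "\<exists>C. \<forall>x. \<forall>\<xi>\<in>I. - v x \<xi> \<le> C"
  shows "\<forall>x. \<forall>\<xi>\<in>I. u x \<xi> \<le> v x \<xi>"
proof -
  have Is: "I \<in> sets lborel" using real_interval_borel_measurable[OF I_interval] by simp
  have Ifin: "emeasure lborel I < \<infinity>" by (rule emeasure_bounded_finite[OF I_bounded])
  have Ine: "I \<noteq> {}" using I_length by auto
  obtain C1 C2 m where C: "C1 > 0" "C2 > 0" "m > 1"
    and B1': "\<And>x p \<xi>. \<xi> \<in> I \<Longrightarrow> C1 * norm p powr m - C2 \<le> H x p \<xi>"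
    using B1 by blast
  obtain Cu0 where Cu0: "\<And>x \<xi>. \<xi> \<in> I \<Longrightarrow> u x \<xi> \<le> Cu0" using u_bdd by blast
  obtain Cv0 where Cv0: "\<And>x \<xi>. \<xi> \<in> I \<Longrightarrow> - v x \<xi> \<le> Cv0" using v_bdd by blast
  define Cu where "Cu = max Cu0 0"
  define Cv where "Cv = max Cv0 0"
  have Cu: "Cu \<ge> 0" "\<And>x \<eta>. \<eta> \<in> I \<Longrightarrow> u x \<eta> \<le> Cu"
    unfolding Cu_def using Cu0 by (auto simp: le_max_iff_disj)
  have Cv: "Cv \<ge> 0" "\<And>x \<eta>. \<eta> \<in> I \<Longrightarrow> - v x \<eta> \<le> Cv"
    unfolding Cv_def using Cv0 by (auto simp: le_max_iff_disj)
  have kmeas: "set_borel_measurable lborel I (k \<xi>)" if xi: "\<xi> \<in> I" for \<xi>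
  proof -
    have g: "(\<lambda>\<eta>::real. (\<xi>, \<eta>)) \<in> borel_measurable lborel"
    proof -
      have "continuous_on UNIV (\<lambda>\<eta>::real. (\<xi>, \<eta>))" by (intro continuous_intros)
      then have "(\<lambda>\<eta>::real. (\<xi>, \<eta>)) \<in> borel_measurable borel" by (rule borel_measurable_continuous_onI)
      then show ?thesis by simp
    qed
    have km: "(\<lambda>q. indicator (I \<times> I) q * (case q of (a, b) \<Rightarrow> k a b)) \<in> borel_measurable borel"
      using k_meas unfolding set_borel_measurable_def by simp
    have "(\<lambda>\<eta>. indicator (I \<times> I) (\<xi>, \<eta>) * (case (\<xi>, \<eta>) of (a, b) \<Rightarrow> k a b)) \<in> borel_measurable lborel"
      using measurable_compose[OF g km] by (simp add: o_def)
    moreover have "(\<lambda>\<eta>. indicator (I \<times> I) (\<xi>, \<eta>) * (case (\<xi>, \<eta>) of (a, b) \<Rightarrow> k a b)) = (\<lambda>\<eta>. indicator I \<eta> * k \<xi> \<eta>)"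
      using xi by (auto simp: indicator_def)
    ultimately show ?thesis unfolding set_borel_measurable_def by simp
  qed
  define T where "T = {u x \<eta> - v x \<eta> | x \<eta>. \<eta> \<in> I}"
  have Tne: "T \<noteq> {}" using Ine unfolding T_def by blast
  have Tbdd: "bdd_above T"
  proof (rule bdd_aboveI[where M="Cu + Cv"])
    fix w assume "w \<in> T"
    then obtain x \<eta> where "w = u x \<eta> - v x \<eta>" "\<eta> \<in> I" unfolding T_def by blast
    then show "w \<le> Cu + Cv" using Cu(2)[of \<eta> x] Cv(2)[of \<eta> x] by linarith
  qed
  define \<theta> where "\<theta> = Sup T"
  have th: "u x \<eta> - v x \<eta> \<le> \<theta>" if "\<eta> \<in> I" for x \<eta>
    unfolding \<theta>_def using that Tbdd by (intro cSup_upper) (auto simp: T_def)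
  have key: "(\<alpha> + K) * (u z \<xi> - v z \<xi>) \<le> K * \<theta> \<and> k0 \<le> K \<and> K \<le> k1"
    if xi: "\<xi> \<in> I" and K: "K = (LINT \<eta>:I|lborel. k \<xi> \<eta>)" for z \<xi> K
    unfolding K
    by (rule core[OF Is Ifin I_length kmeas[OF xi] k0_pos k_bounds[OF xi] xi C B1'[OF xi] B2 alpha_pos
          u_sub v_super Cu Cv th])
  have thle: "\<theta> \<le> 0"
  proof (rule ccontr)
    assume "\<not> \<theta> \<le> 0"
    then have tp: "\<theta> > 0" by simp
    have k1p: "k1 > 0" using k_bounds[of _ _] Ine k0_pos by (metis all_not_in_conv order.strict_trans2)
    have wle: "w * (\<alpha> + k1) \<le> k1 * \<theta>" if wT: "w \<in> T" for w
    proof -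
      obtain x \<xi> where w: "w = u x \<xi> - v x \<xi>" "\<xi> \<in> I" using wT unfolding T_def by blast
      define K where "K = (LINT \<eta>:I|lborel. k \<xi> \<eta>)"
      have kk: "(\<alpha> + K) * w \<le> K * \<theta>" "k0 \<le> K" "K \<le> k1" using key[OF w(2) K_def, of x] w(1) by auto
      have wt: "w \<le> \<theta>" using th[OF w(2), of x] w(1) by simp
      show ?thesis
      proof (cases "w \<le> 0")
        case True
        then have "w * (\<alpha> + k1) \<le> 0" using alpha_pos k1p by (intro mult_nonpos_nonneg) auto
        also have "0 \<le> k1 * \<theta>" using k1p tp by simp
        finally show ?thesis .
      next
        case False
        have "w * (k1 - K) \<le> \<theta> * (k1 - K)" using wt kk(3) by (intro mult_right_mono) auto
        then have "w * (\<alpha> + k1) \<le> (\<alpha> + K) * w + \<theta> * (k1 - K)" by (simp add: algebra_simps)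
        also have "\<dots> \<le> K * \<theta> + \<theta> * (k1 - K)" using kk(1) by simp
        also have "\<dots> = k1 * \<theta>" by (simp add: algebra_simps)
        finally show ?thesis .
      qed
    qed
    have "\<theta> \<le> k1 * \<theta> / (\<alpha> + k1)"
      unfolding \<theta>_def
    proof (rule cSup_least[OF Tne])
      fix w assume "w \<in> T"
      then show "w \<le> k1 * Sup T / (\<alpha> + k1)"
        using wle[of w] alpha_pos k1p unfolding \<theta>_def by (simp add: pos_le_divide_eq)
    qed
    then have "\<theta> * (\<alpha> + k1) \<le> k1 * \<theta>" using alpha_pos k1p by (simp add: pos_le_divide_eq)
    then have "\<alpha> * \<theta> \<le> 0" by (simp add: algebra_simps)
    then show False using alpha_pos tp by (simp add: mult_le_0_iff)
  qed
  show ?thesis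
  proof (intro allI ballI)
    fix x \<xi> assume "\<xi> \<in> I"
    then show "u x \<xi> \<le> v x \<xi>" using th[of \<xi> x] thle by linarith
  qed
qed


end
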